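(* Let $T:X\to X$ be a continuous map on a compact metric space $X$ such that $\mathcal M^p_T(X)$ is dense in $\mathcal M_T(X)$. Let $\varphi=(\varphi_1,\ldots,\varphi_d)\in C(X,\mathbb R^d)$ and $h\in\operatorname{int}(\mathrm{Rot}(\varphi))$. Then $\mathrm{rv}_\varphi^{-1}(h)\cap\mathcal N_T$ is dense in $\mathrm{rv}_\varphi^{-1}(h)$.
   Context: $\mathcal M_T(X)$ is the set of $T$-invariant Borel probability measures with the weak* topology; $\mathcal M^p_T(X)$ is the set of invariant measures supported on a single periodic orbit. For $\mu\in\mathcal M_T(X)$, $\mathrm{rv}_\varphi(\mu)=(\int\varphi_1d\mu,\dots,\int\varphi_dd\mu)$, $\mathrm{Rot}(\varphi)=\{\mathrm{rv}_\varphi(\mu):\mu\in\mathcal M_T(X)\}\subset\mathbb R^d$, and $\mathrm{rv}_\varphi^{-1}(h)\subset \mathcal M_T(X)$ carries the subspace topology. Let $\Delta^{d+1}=\{(\lambda_1,\dots,\lambda_{d+1})\in(0,1)^{d+1}:\sum\lambda_i=1\}$. $\mathcal N_T$ is the set of measures $\sum_{i=1}^{d+1}\lambda_i\mu_i$ with $\mu_i\in\mathcal M^p_T(X)$, $(\lambda_1,\dots,\lambda_{d+1})\in\Delta^{d+1}$, and such that the vectors $\mathrm{rv}_\varphi(\mu_i)-\mathrm{rv}_\varphi(\mu_{d+1})$, $i=1,\dots,d$, span $\mathbb R^d$. *)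

theory Defs
  imports "HOL-Analysis.Analysis" "HOL-Probability.Probability"
begin

text \<open>The compact metric space X is the whole (nonempty) type 'a, with compact UNIV.
  Borel probability measures on X are measures M with sets M = sets borel and prob_space M.\<close>

definition invariant_measures :: "('a::metric_space \<Rightarrow> 'a) \<Rightarrow> 'a measure set" where
  "invariant_measures T = {M. sets M = sets borel \<and> prob_space M \<and>
      (\<forall>A \<in> sets borel. emeasure M (T -` A) = emeasure M A)}"

definition periodic_measures :: "('a::metric_space \<Rightarrow> 'a) \<Rightarrow> 'a measure set" where
  "periodic_measures T = {M \<in> invariant_measures T. \<exists>x n. n > 0 \<and> (T ^^ n) x = x \<and>
      emeasure M {(T ^^ k) x | k. k < n} = 1}"

definition weak_star_topology :: "'a::metric_space measure topology" where
  "weak_star_topology = topology_generated_by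
      {{M. integral\<^sup>L M f \<in> U} | f U. continuous_on UNIV f \<and> open (U :: real set)}"

definition rot_vec :: "('a::metric_space \<Rightarrow> real ^ 'd) \<Rightarrow> 'a measure \<Rightarrow> real ^ 'd" where
  "rot_vec \<phi> M = (\<chi> i. integral\<^sup>L M (\<lambda>x. \<phi> x $ i))"

definition Rot :: "('a::metric_space \<Rightarrow> 'a) \<Rightarrow> ('a \<Rightarrow> real ^ 'd) \<Rightarrow> (real ^ 'd) set" where
  "Rot T \<phi> = rot_vec \<phi> ` invariant_measures T"

definition rot_preimage :: "('a::metric_space \<Rightarrow> 'a) \<Rightarrow> ('a \<Rightarrow> real ^ 'd) \<Rightarrow> real ^ 'd \<Rightarrow> 'a measure set" where
  "rot_preimage T \<phi> h = {M \<in> invariant_measures T. rot_vec \<phi> M = h}"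

text \<open>The set N_T, with d = CARD('d); the measures are indexed 0..d
  (index d playing the role of d+1 in the paper).\<close>
definition N_set :: "('a::metric_space \<Rightarrow> 'a) \<Rightarrow> ('a \<Rightarrow> real ^ 'd) \<Rightarrow> 'a measure set" where
  "N_set T \<phi> = {M. \<exists>(\<nu> :: nat \<Rightarrow> 'a measure) (lam :: nat \<Rightarrow> real).
      (\<forall>i \<le> CARD('d). \<nu> i \<in> periodic_measures T \<and> 0 < lam i) \<and>
      (\<Sum>i\<le>CARD('d). lam i) = 1 \<and>
      span {rot_vec \<phi> (\<nu> i) - rot_vec \<phi> (\<nu> CARD('d)) | i. i < CARD('d)} = UNIV \<and>
      sets M = sets borel \<and>
      (\<forall>A \<in> sets borel. emeasure M A = (\<Sum>i\<le>CARD('d). ennreal (lam i) * emeasure (\<nu> i) A))}"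

end

theory Submission
  imports Defs
begin


definition dirv :: "(nat \<Rightarrow> 'd::finite) \<Rightarrow> nat \<Rightarrow> real^'d" where
  "dirv idx i = (if i < CARD('d) then axis (idx i) 1 else - (\<chi> k. 1))"

lemma inner_sum_vec: "(v::real^'d) \<bullet> (\<chi> k. 1) = (\<Sum>j\<in>UNIV. v$j)"
  by (simp add: inner_vec_def)

lemma inner_axis1: "(v::real^'d) \<bullet> axis j 1 = v$j"
  by (simp add: inner_axis)

lemma margin:
  fixes v :: "real^'d" and idx :: "nat \<Rightarrow> 'd"
  assumes bij: "bij_betw idx {..<CARD('d)} UNIV"
  shows "\<exists>i\<le>CARD('d). v \<bullet> dirv idx i \<ge> norm v / (CARD('d) * (CARD('d)+1))"
proof -
  define d where "d = CARD('d)"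
  have d0: "d > 0" unfolding d_def by simp
  obtain k where k: "\<And>j. \<bar>v$j\<bar> \<le> \<bar>v$k\<bar>"
  proof -
    have "finite ((\<lambda>j. \<bar>v$j\<bar>) ` UNIV)" by simp
    then obtain k where "\<bar>v$k\<bar> = Max ((\<lambda>j. \<bar>v$j\<bar>) ` UNIV)"
      by (metis (mono_tags, lifting) Max_in UNIV_not_empty empty_is_image imageE)
    then show ?thesis using that by (metis Max_ge \<open>finite _\<close> rangeI)
  qed
  define m where "m = \<bar>v$k\<bar>"
  have m0: "m \<ge> 0" unfolding m_def by simp
  have nv: "norm v \<le> d * m"
  proof -
    have "norm v \<le> (\<Sum>j\<in>UNIV. \<bar>v$j\<bar>)" by (rule norm_le_l1_cart)
    also have "\<dots> \<le> of_nat (card (UNIV::'d set)) * m"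
      using sum_bounded_above[of UNIV "\<lambda>j. \<bar>v$j\<bar>" m] k unfolding m_def by auto
    finally show ?thesis unfolding d_def by simp
  qed
  have key: "norm v / (d * (d+1)) \<le> m / (d+1)"
  proof -
    have "norm v / d \<le> m" using nv d0 by (simp add: divide_le_eq mult.commute)
    then have "(norm v / d)/(d+1) \<le> m/(d+1)" by (intro divide_right_mono) auto
    then show ?thesis by (simp only: divide_divide_eq_left of_nat_mult)
  qed
  show ?thesis
  proof (cases "\<exists>j. v$j \<ge> m/(d+1)")
    case True
    then obtain j where j: "v$j \<ge> m/(d+1)" by blast
    obtain i where i: "i < d" "idx i = j" using bij unfolding bij_betw_def d_def
      by (metis UNIV_I imageE lessThan_iff)
    have "v \<bullet> dirv idx i = v$j" using i by (simp add: dirv_def d_def inner_axis1)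
    then show ?thesis using i j key unfolding d_def by (intro exI[of _ i]) auto
  next
    case False
    then have lt: "\<And>j. v$j < m/(d+1)" by (meson not_le)
    have "m/(d+1) \<le> m/1" using m0 by (intro divide_left_mono) auto
    then have vk: "v$k = - m" using lt[of k] unfolding m_def by (cases "v$k \<ge> 0") auto
    have "(\<Sum>j\<in>UNIV-{k}. v$j) \<le> of_nat (card (UNIV-{k})) * (m/(d+1))"
      using sum_bounded_above[of "UNIV-{k}" "\<lambda>j. v$j" "m/(d+1)"] lt by (auto simp: less_imp_le)
    also have "card (UNIV - {k}) = d - 1" unfolding d_def by (simp add: card_Diff_singleton)
    finally have s1: "(\<Sum>j\<in>UNIV-{k}. v$j) \<le> real (d-1) * (m/(d+1))" .
    have "(\<Sum>j\<in>UNIV. v$j) = v$k + (\<Sum>j\<in>UNIV-{k}. v$j)"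
      by (simp add: sum.remove)
    with s1 vk have s2: "(\<Sum>j\<in>UNIV. v$j) \<le> - m + real (d-1) * (m/(d+1))" by simp
    have "real (d-1) * (m/(d+1)) \<le> real d * (m/(d+1))"
      using m0 by (intro mult_right_mono) auto
    also have "real d * (m/(d+1)) = m - m/(d+1)" using d0 by (simp add: field_simps)
    finally have "- (\<Sum>j\<in>UNIV. v$j) \<ge> m/(d+1)" using s2 by linarith
    moreover have "v \<bullet> dirv idx d = - (\<Sum>j\<in>UNIV. v$j)"
      by (simp add: dirv_def d_def inner_sum_vec)
    ultimately have "v \<bullet> dirv idx d \<ge> norm v / (d * (d+1))" using key by linarith
    then show ?thesis unfolding d_def by blast
  qed
qed

lemma geom:
  fixes u :: "nat \<Rightarrow> real^'d" and h :: "real^'d" and idx :: "nat \<Rightarrow> 'd"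
  assumes bij: "bij_betw idx {..<CARD('d)} UNIV"
    and s: "s > 0"
    and close: "\<And>i. i \<le> CARD('d) \<Longrightarrow> norm (u i - (h + s *\<^sub>R dirv idx i)) \<le> s / (2 * (CARD('d) * (CARD('d)+1)))"
  shows "\<exists>lam. (\<forall>i\<le>CARD('d). 0 < lam i) \<and> (\<Sum>i\<le>CARD('d). lam i) = 1 \<and>
     (\<Sum>i\<le>CARD('d). lam i *\<^sub>R u i) = h \<and> span {u i - u CARD('d) | i. i < CARD('d)} = UNIV"
proof -
  define d where "d = CARD('d)"
  have d0: "d > 0" unfolding d_def by simp
  define c where "c = s / (2 * (d * (d+1)))"
  have Dpos: "(0::real) < 2 * (d * (d+1))" using d0 by (simp only: of_nat_0_less_iff) simp
  then have c0: "c > 0" using s unfolding c_def by (intro divide_pos_pos)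
  have mg: "\<exists>i\<le>d. v \<bullet> (u i - h) \<ge> norm v * c" for v
  proof -
    obtain i where i: "i \<le> d" "v \<bullet> dirv idx i \<ge> norm v / (d * (d+1))"
      using margin[OF bij, of v] unfolding d_def by blast
    have e: "norm (u i - (h + s *\<^sub>R dirv idx i)) \<le> c" using close[of i] i unfolding c_def d_def by simp
    have "u i - h = s *\<^sub>R dirv idx i + (u i - (h + s *\<^sub>R dirv idx i))" by simp
    then have "v \<bullet> (u i - h) = s * (v \<bullet> dirv idx i) + v \<bullet> (u i - (h + s *\<^sub>R dirv idx i))"
      by (metis inner_add_right inner_scaleR_right)
    moreover have "\<bar>v \<bullet> (u i - (h + s *\<^sub>R dirv idx i))\<bar> \<le> norm v * c"
      using Cauchy_Schwarz_ineq2[of v] e by (meson mult_left_mono norm_ge_zero order_trans)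
    moreover have "s * (v \<bullet> dirv idx i) \<ge> s * (norm v / (d * (d+1)))"
      using i s by (intro mult_left_mono) auto
    moreover have "s * (norm v / (d * (d+1))) = 2 * (norm v * c)" using Dpos unfolding c_def by (simp add: field_simps)
    ultimately show ?thesis using i by (intro exI[of _ i]) auto
  qed
  define S where "S = u ` {..d}"
  have finS: "finite S" unfolding S_def by simp
  have uS: "i \<le> d \<Longrightarrow> u i \<in> convex hull S" for i
    unfolding S_def by (intro hull_inc) auto
  have ball: "ball h c \<subseteq> convex hull S"
  proof
    fix y assume y: "y \<in> ball h c"
    show "y \<in> convex hull S"
    proof (rule ccontr)
      assume ny: "y \<notin> convex hull S"
      have "closed (convex hull S)" using finS by (simp add: compact_imp_closed finite_imp_compact_convex_hull)
      then obtain a b where ab: "a \<bullet> y < b" "\<And>x. x \<in> convex hull S \<Longrightarrow> a \<bullet> x > b"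
        using separating_hyperplane_closed_point[OF convex_convex_hull _ ny] by blast
      have a0: "a \<noteq> 0" using ab(1) ab(2)[OF uS[of d]] by force
      obtain i where i: "i \<le> d" "(-a) \<bullet> (u i - h) \<ge> norm (-a) * c" using mg by blast
      have "(-a) \<bullet> (u i - h) = a \<bullet> h - a \<bullet> u i" by (simp add: inner_diff_right)
      also have "\<dots> < a \<bullet> h - a \<bullet> y" using ab(1) ab(2)[OF uS[OF i(1)]] by simp
      also have "\<dots> = a \<bullet> (h - y)" by (simp add: inner_diff_right)
      also have "\<dots> \<le> norm a * norm (h - y)" by (rule norm_cauchy_schwarz)
      also have "\<dots> \<le> norm a * c" using y by (intro mult_left_mono) (auto simp: dist_norm less_imp_le)
      finally show False using i by simp
    qed
  qed
  have hint: "h \<in> interior (convex hull S)"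
    using ball c0 by (meson centre_in_ball interior_maximal open_ball subsetD)
  then have "aff_dim (convex hull S) = DIM(real^'d)"
    using aff_dim_nonempty_interior by blast
  then have affS: "aff_dim S = d" unfolding d_def by (simp add: aff_dim_convex_hull)
  have cardS: "card S \<le> d + 1" unfolding S_def using card_image_le[of "{..d}" u] by simp
  have "aff_dim S \<le> int (card S) - 1" using aff_dim_le_card[OF finS] by simp
  then have cardS': "card S = d + 1" using affS cardS by linarith
  have injS: "inj_on u {..d}"
    using cardS' unfolding S_def by (intro eq_card_imp_inj_on) auto
  have indep: "\<not> affine_dependent S"
    using affine_independent_iff_card[of S] finS affS cardS' by simp
  have "\<not> card S \<le> DIM(real^'d)" using cardS' unfolding d_def by simp
  then have "interior (convex hull S) = {y. \<exists>w. (\<forall>x\<in>S. 0 < w x \<and> w x < 1) \<and> sum w S = 1 \<and> (\<Sum>x\<in>S. w x *\<^sub>R x) = y}"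
    using interior_convex_hull_explicit[OF indep] by presburger
  then obtain w where w: "\<forall>x\<in>S. 0 < w x" "sum w S = 1" "(\<Sum>x\<in>S. w x *\<^sub>R x) = h"
    using hint by blast
  define lam where "lam i = w (u i)" for i
  have l1: "(\<Sum>i\<le>d. lam i) = 1"
  proof -
    have "(\<Sum>i\<le>d. lam i) = sum w S" unfolding S_def lam_def by (simp add: sum.reindex[OF injS])
    then show ?thesis using w(2) by simp
  qed
  have l2: "(\<Sum>i\<le>d. lam i *\<^sub>R u i) = h"
  proof -
    have "(\<Sum>i\<le>d. lam i *\<^sub>R u i) = (\<Sum>x\<in>S. w x *\<^sub>R x)" unfolding S_def lam_def by (simp add: sum.reindex[OF injS])
    then show ?thesis using w(3) by simp
  qed
  have l0: "\<forall>i\<le>d. 0 < lam i" using w(1) unfolding lam_def S_def by simp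
  have "u d \<in> affine hull S" unfolding S_def by (intro hull_inc) auto
  from aff_dim_eq_dim[OF this] affS have "dim ((+) (- u d) ` S) = d" by simp
  moreover have "(+) (- u d) ` S = insert 0 {u i - u d | i. i < d}"
  proof
    show "(+) (- u d) ` S \<subseteq> insert 0 {u i - u d | i. i < d}"
    proof
      fix y assume "y \<in> (+) (- u d) ` S"
      then obtain i where i: "i \<le> d" "y = - u d + u i" unfolding S_def by auto
      show "y \<in> insert 0 {u i - u d | i. i < d}"
      proof (cases "i = d")
        case True then show ?thesis using i by simp
      next
        case False then have "i < d" using i by simp
        then show ?thesis using i by auto
      qed
    qed
    show "insert 0 {u i - u d | i. i < d} \<subseteq> (+) (- u d) ` S"
    proof
      fix y assume y: "y \<in> insert 0 {u i - u d | i. i < d}"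
      obtain i where i: "i \<le> d" "y = - u d + u i"
      proof (cases "y = 0")
        case True then show ?thesis using that[of d] by simp
      next
        case False then obtain i where "i < d" "y = u i - u d" using y by auto
        then show ?thesis using that[of i] by simp
      qed
      then show "y \<in> (+) (- u d) ` S" unfolding S_def by auto
    qed
  qed
  ultimately have "dim (insert 0 {u i - u d | i. i < d}) = DIM(real^'d)" unfolding d_def by simp
  then have "span (insert 0 {u i - u d | i. i < d}) = UNIV" using dim_eq_full by blast
  then have "span {u i - u d | i. i < d} = UNIV" by (simp add: span_insert_0)
  then show ?thesis using l0 l1 l2 unfolding d_def by blast
qed



definition mixm :: "nat set \<Rightarrow> (nat \<Rightarrow> real) \<Rightarrow> (nat \<Rightarrow> 'a::topological_space measure) \<Rightarrow> 'a measure" where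
  "mixm I c \<nu> = measure_of (space borel) (sets borel) (\<lambda>A. \<Sum>i\<in>I. ennreal (c i) * emeasure (\<nu> i) A)"

lemma sets_mixm[simp]: "sets (mixm I c \<nu>) = sets borel"
  unfolding mixm_def by (rule sets.sets_measure_of_eq)

lemma space_mixm[simp]: "space (mixm I c \<nu>) = UNIV"
  using sets_eq_imp_space_eq[OF sets_mixm] by simp

lemma emeasure_mixm:
  assumes fin: "finite I" and sets: "\<And>i. i \<in> I \<Longrightarrow> sets (\<nu> i) = sets borel"
    and A: "A \<in> sets borel"
  shows "emeasure (mixm I c \<nu>) A = (\<Sum>i\<in>I. ennreal (c i) * emeasure (\<nu> i) A)"
  unfolding mixm_def
proof (rule emeasure_measure_of_sigma)
  show "sigma_algebra (space borel) (sets borel)" by (rule sets.sigma_algebra_axioms)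
  show "positive (sets borel) (\<lambda>A. \<Sum>i\<in>I. ennreal (c i) * emeasure (\<nu> i) A)"
    unfolding positive_def by simp
  show "countably_additive (sets borel) (\<lambda>A. \<Sum>i\<in>I. ennreal (c i) * emeasure (\<nu> i) A)"
    unfolding countably_additive_def
  proof (intro allI impI)
    fix F :: "nat \<Rightarrow> 'a set" assume F: "range F \<subseteq> sets borel" "disjoint_family F"
    have "(\<Sum>n. \<Sum>i\<in>I. ennreal (c i) * emeasure (\<nu> i) (F n)) = (\<Sum>i\<in>I. \<Sum>n. ennreal (c i) * emeasure (\<nu> i) (F n))"
      by (rule suminf_sum) simp
    also have "\<dots> = (\<Sum>i\<in>I. ennreal (c i) * emeasure (\<nu> i) (\<Union> (range F)))"
    proof (rule sum.cong[OF refl])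
      fix i assume i: "i \<in> I"
      have "(\<Sum>n. emeasure (\<nu> i) (F n)) = emeasure (\<nu> i) (\<Union>n. F n)"
        using F sets[OF i] by (intro suminf_emeasure) auto
      then show "(\<Sum>n. ennreal (c i) * emeasure (\<nu> i) (F n)) = ennreal (c i) * emeasure (\<nu> i) (\<Union> (range F))"
        by simp
    qed
    finally show "(\<Sum>n. \<Sum>i\<in>I. ennreal (c i) * emeasure (\<nu> i) (F n)) = (\<Sum>i\<in>I. ennreal (c i) * emeasure (\<nu> i) (\<Union> (range F)))" .
  qed
  show "A \<in> sets borel" by (rule A)
qed

lemma nn_integral_mixm:
  assumes fin: "finite I" and sets: "\<And>i. i \<in> I \<Longrightarrow> sets (\<nu> i) = sets borel"
    and f: "f \<in> borel_measurable borel"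
  shows "(\<integral>\<^sup>+x. f x \<partial>mixm I c \<nu>) = (\<Sum>i\<in>I. ennreal (c i) * (\<integral>\<^sup>+x. f x \<partial>\<nu> i))"
proof -
  have f': "f \<in> borel_measurable (mixm I c \<nu>)" using f measurable_cong_sets[OF sets_mixm refl] by blast
  have meas: "g \<in> borel_measurable (mixm I c \<nu>) \<Longrightarrow> i \<in> I \<Longrightarrow> g \<in> borel_measurable (\<nu> i)" for g :: "'a \<Rightarrow> ennreal" and i
    using measurable_cong_sets[OF sets[of i] refl, where ?N = "borel :: ennreal measure"] measurable_cong_sets[OF sets_mixm refl, of I c \<nu> "borel :: ennreal measure"] by blast
  from f' show ?thesis
  proof (induct rule: borel_measurable_induct)
    case (cong f g)
    then have "f = g" by (auto simp: fun_eq_iff)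
    then show ?case using cong by simp
  next
    case (set A)
    then have A: "A \<in> sets borel" by simp
    have "(\<integral>\<^sup>+x. indicator A x \<partial>mixm I c \<nu>) = emeasure (mixm I c \<nu>) A" using set by simp
    also have "\<dots> = (\<Sum>i\<in>I. ennreal (c i) * emeasure (\<nu> i) A)" by (rule emeasure_mixm[OF fin sets A])
    also have "\<dots> = (\<Sum>i\<in>I. ennreal (c i) * (\<integral>\<^sup>+x. indicator A x \<partial>\<nu> i))"
      using sets A by (intro sum.cong refl) simp
    finally show ?case .
  next
    case (mult u r)
    have "(\<integral>\<^sup>+x. r * u x \<partial>mixm I c \<nu>) = r * (\<integral>\<^sup>+x. u x \<partial>mixm I c \<nu>)"
      by (rule nn_integral_cmult) (rule mult(2))
    also have "\<dots> = r * (\<Sum>i\<in>I. ennreal (c i) * (\<integral>\<^sup>+x. u x \<partial>\<nu> i))"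
      using mult(4) by simp
    also have "\<dots> = (\<Sum>i\<in>I. ennreal (c i) * (r * (\<integral>\<^sup>+x. u x \<partial>\<nu> i)))"
      by (simp only: sum_distrib_left mult.left_commute)
    also have "\<dots> = (\<Sum>i\<in>I. ennreal (c i) * (\<integral>\<^sup>+x. r * u x \<partial>\<nu> i))"
    proof (rule sum.cong[OF refl])
      fix i assume i: "i \<in> I"
      show "ennreal (c i) * (r * (\<integral>\<^sup>+x. u x \<partial>\<nu> i)) = ennreal (c i) * (\<integral>\<^sup>+x. r * u x \<partial>\<nu> i)"
        using nn_integral_cmult[OF meas[OF mult(2) i], of r] by simp
    qed
    finally show ?case .
  next
    case (add u v)
    have "(\<integral>\<^sup>+x. v x + u x \<partial>mixm I c \<nu>) = (\<integral>\<^sup>+x. v x \<partial>mixm I c \<nu>) + (\<integral>\<^sup>+x. u x \<partial>mixm I c \<nu>)"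
      by (rule nn_integral_add) (fact add)+
    also have "\<dots> = (\<Sum>i\<in>I. ennreal (c i) * (\<integral>\<^sup>+x. v x \<partial>\<nu> i)) + (\<Sum>i\<in>I. ennreal (c i) * (\<integral>\<^sup>+x. u x \<partial>\<nu> i))"
      using add(3) add(7) by simp
    also have "\<dots> = (\<Sum>i\<in>I. ennreal (c i) * ((\<integral>\<^sup>+x. v x \<partial>\<nu> i) + (\<integral>\<^sup>+x. u x \<partial>\<nu> i)))"
      by (simp only: sum.distrib[symmetric] distrib_left)
    also have "\<dots> = (\<Sum>i\<in>I. ennreal (c i) * (\<integral>\<^sup>+x. v x + u x \<partial>\<nu> i))"
    proof (rule sum.cong[OF refl])
      fix i assume i: "i \<in> I"
      show "ennreal (c i) * ((\<integral>\<^sup>+x. v x \<partial>\<nu> i) + (\<integral>\<^sup>+x. u x \<partial>\<nu> i)) = ennreal (c i) * (\<integral>\<^sup>+x. v x + u x \<partial>\<nu> i)"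
        using nn_integral_add[OF meas[OF add(4) i] meas[OF add(1) i]] by simp
    qed
    finally show ?case .
  next
    case (seq U)
    have "(\<integral>\<^sup>+x. (SUP n. U n) x \<partial>mixm I c \<nu>) = (SUP n. \<integral>\<^sup>+x. U n x \<partial>mixm I c \<nu>)"
      using nn_integral_monotone_convergence_SUP[OF seq(4) seq(1)] by (simp add: image_comp)
    also have "\<dots> = (SUP n. \<Sum>i\<in>I. ennreal (c i) * (\<integral>\<^sup>+x. U n x \<partial>\<nu> i))"
      using seq(3) by simp
    also have "\<dots> = (\<Sum>i\<in>I. SUP n. ennreal (c i) * (\<integral>\<^sup>+x. U n x \<partial>\<nu> i))"
    proof (rule ennreal_SUP_sum)
      fix i assume "i \<in> I"
      show "incseq (\<lambda>n. ennreal (c i) * (\<integral>\<^sup>+x. U n x \<partial>\<nu> i))"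
        using seq(4) by (auto simp: incseq_def le_fun_def intro!: mult_left_mono nn_integral_mono)
    qed
    also have "\<dots> = (\<Sum>i\<in>I. ennreal (c i) * (\<integral>\<^sup>+x. (SUP n. U n) x \<partial>\<nu> i))"
    proof (rule sum.cong[OF refl])
      fix i assume i: "i \<in> I"
      have "(\<integral>\<^sup>+x. (SUP n. U n) x \<partial>\<nu> i) = (SUP n. \<integral>\<^sup>+x. U n x \<partial>\<nu> i)"
        using nn_integral_monotone_convergence_SUP[OF seq(4) meas[OF seq(1) i]] by (simp add: image_comp)
      then show "(SUP n. ennreal (c i) * (\<integral>\<^sup>+x. U n x \<partial>\<nu> i)) = ennreal (c i) * (\<integral>\<^sup>+x. (SUP n. U n) x \<partial>\<nu> i)"
        by (simp add: SUP_mult_left_ennreal)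
    qed
    finally show ?case .
  qed
qed

lemma prob_space_mixm:
  assumes fin: "finite I" and sets: "\<And>i. i \<in> I \<Longrightarrow> sets (\<nu> i) = sets borel"
    and pr: "\<And>i. i \<in> I \<Longrightarrow> prob_space (\<nu> i)"
    and c: "\<And>i. i \<in> I \<Longrightarrow> c i \<ge> 0" and c1: "(\<Sum>i\<in>I. c i) = 1"
  shows "prob_space (mixm I c \<nu>)"
proof
  have "emeasure (mixm I c \<nu>) UNIV = (\<Sum>i\<in>I. ennreal (c i) * emeasure (\<nu> i) UNIV)"
    by (rule emeasure_mixm[OF fin sets]) auto
  also have "\<dots> = (\<Sum>i\<in>I. ennreal (c i))"
  proof (rule sum.cong[OF refl])
    fix i assume i: "i \<in> I"
    have "space (\<nu> i) = UNIV" using sets_eq_imp_space_eq[OF sets[OF i]] by simp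
    then have "emeasure (\<nu> i) UNIV = 1" using prob_space.emeasure_space_1[OF pr[OF i]] by simp
    then show "ennreal (c i) * emeasure (\<nu> i) UNIV = ennreal (c i)" by simp
  qed
  also have "\<dots> = 1" using c c1 by simp
  finally show "emeasure (mixm I c \<nu>) (space (mixm I c \<nu>)) = 1" by simp
qed

lemma integrable_bounded_prob:
  fixes f :: "'a::topological_space \<Rightarrow> real"
  assumes "sets P = sets borel" "prob_space P" "f \<in> borel_measurable borel" "\<And>x. \<bar>f x\<bar> \<le> B"
  shows "integrable P f"
proof -
  interpret prob_space P by fact
  have "f \<in> borel_measurable P" using assms(3) measurable_cong_sets[OF assms(1) refl] by blast
  then show ?thesis using assms(4) by (intro integrable_const_bound[where B=B]) auto
qed

lemma integral_shift_prob:
  fixes f :: "'a::topological_space \<Rightarrow> real"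
  assumes "sets P = sets borel" "prob_space P" "f \<in> borel_measurable borel" "\<And>x. \<bar>f x\<bar> \<le> B"
  shows "ennreal (integral\<^sup>L P f + B) = (\<integral>\<^sup>+x. ennreal (f x + B) \<partial>P)"
proof -
  interpret prob_space P by fact
  have i: "integrable P f" by (rule integrable_bounded_prob[OF assms])
  have "integral\<^sup>L P (\<lambda>x. f x + B) = integral\<^sup>L P f + B"
    using i by (simp add: prob_space)
  moreover have "(\<integral>\<^sup>+x. ennreal (f x + B) \<partial>P) = ennreal (integral\<^sup>L P (\<lambda>x. f x + B))"
  proof (rule nn_integral_eq_integral)
    show "integrable P (\<lambda>x. f x + B)" using i by (intro Bochner_Integration.integrable_add) auto
    show "AE x in P. 0 \<le> f x + B"
    proof (rule AE_I2)
      fix x show "0 \<le> f x + B" using abs_ge_minus_self[of "f x"] assms(4)[of x] by linarith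
    qed
  qed
  ultimately show ?thesis by simp
qed

lemma integral_mixm:
  fixes f :: "'a::topological_space \<Rightarrow> real"
  assumes fin: "finite I" and sets: "\<And>i. i \<in> I \<Longrightarrow> sets (\<nu> i) = sets borel"
    and pr: "\<And>i. i \<in> I \<Longrightarrow> prob_space (\<nu> i)"
    and c: "\<And>i. i \<in> I \<Longrightarrow> c i \<ge> 0" and c1: "(\<Sum>i\<in>I. c i) = 1"
    and f: "f \<in> borel_measurable borel" and B: "\<And>x. \<bar>f x\<bar> \<le> B"
  shows "integral\<^sup>L (mixm I c \<nu>) f = (\<Sum>i\<in>I. c i * integral\<^sup>L (\<nu> i) f)"
proof -
  have pm: "prob_space (mixm I c \<nu>)" by (rule prob_space_mixm[OF fin sets pr c c1])
  have B0: "B \<ge> 0" using B[of undefined] by simp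
  have fm: "(\<lambda>x. ennreal (f x + B)) \<in> borel_measurable borel" using f by measurable
  have nn: "\<And>P. sets P = sets borel \<Longrightarrow> prob_space P \<Longrightarrow> integral\<^sup>L P f + B \<ge> 0"
  proof -
    fix P :: "'a measure" assume P: "sets P = sets borel" "prob_space P"
    interpret prob_space P by fact
    have "integral\<^sup>L P (\<lambda>x. f x + B) \<ge> 0"
    proof (rule Bochner_Integration.integral_nonneg)
      fix x show "0 \<le> f x + B" using abs_ge_minus_self[of "f x"] B[of x] by linarith
    qed
    moreover have "integral\<^sup>L P (\<lambda>x. f x + B) = integral\<^sup>L P f + B"
      using integrable_bounded_prob[OF P f B] by (simp add: prob_space)
    ultimately show "integral\<^sup>L P f + B \<ge> 0" by simp
  qed
  have "ennreal (integral\<^sup>L (mixm I c \<nu>) f + B) = (\<integral>\<^sup>+x. ennreal (f x + B) \<partial>mixm I c \<nu>)"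
    by (rule integral_shift_prob[OF sets_mixm pm f B])
  also have "\<dots> = (\<Sum>i\<in>I. ennreal (c i) * (\<integral>\<^sup>+x. ennreal (f x + B) \<partial>\<nu> i))"
    by (rule nn_integral_mixm[OF fin sets fm])
  also have "\<dots> = (\<Sum>i\<in>I. ennreal (c i * (integral\<^sup>L (\<nu> i) f + B)))"
  proof (rule sum.cong[OF refl])
    fix i assume i: "i \<in> I"
    show "ennreal (c i) * (\<integral>\<^sup>+x. ennreal (f x + B) \<partial>\<nu> i) = ennreal (c i * (integral\<^sup>L (\<nu> i) f + B))"
      using integral_shift_prob[OF sets[OF i] pr[OF i] f B] nn[OF sets[OF i] pr[OF i]]
      by (simp add: ennreal_mult'')
  qed
  also have "\<dots> = ennreal (\<Sum>i\<in>I. c i * (integral\<^sup>L (\<nu> i) f + B))"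
    using c nn[OF sets pr] by (intro sum_ennreal) auto
  finally have "integral\<^sup>L (mixm I c \<nu>) f + B = (\<Sum>i\<in>I. c i * (integral\<^sup>L (\<nu> i) f + B))"
    using nn[OF sets_mixm pm] c nn[OF sets pr] by (subst (asm) ennreal_inj) (auto intro!: sum_nonneg)
  also have "\<dots> = (\<Sum>i\<in>I. c i * integral\<^sup>L (\<nu> i) f) + B"
    using c1 by (simp add: distrib_left sum.distrib sum_distrib_right[symmetric])
  finally show ?thesis by simp
qed

lemma invariant_mixm:
  assumes fin: "finite I" and sets: "\<And>i. i \<in> I \<Longrightarrow> sets (\<nu> i) = sets borel"
    and inv: "\<And>i A. i \<in> I \<Longrightarrow> A \<in> sets borel \<Longrightarrow> emeasure (\<nu> i) (T -` A) = emeasure (\<nu> i) A"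
    and T: "continuous_on UNIV T" and A: "A \<in> sets borel"
  shows "emeasure (mixm I c \<nu>) (T -` A) = emeasure (mixm I c \<nu>) A"
proof -
  have TA: "T -` A \<in> sets borel"
    using measurable_sets[OF borel_measurable_continuous_onI[OF T] A] by simp
  show ?thesis using emeasure_mixm[OF fin sets TA] emeasure_mixm[OF fin sets A] inv A by simp
qed


lemma dirv_norm: "norm (dirv idx i :: real^'d) \<le> CARD('d)"
proof (cases "i < CARD('d)")
  case True
  then show ?thesis by (simp add: dirv_def)
next
  case False
  have "norm (- (\<chi> k. 1) :: real^'d) \<le> (\<Sum>j\<in>UNIV. \<bar>(- (\<chi> k. 1) :: real^'d) $ j\<bar>)" by (rule norm_le_l1_cart)
  also have "\<dots> = CARD('d)" by simp
  finally show ?thesis using False by (simp add: dirv_def)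
qed

lemma ws_topspace: "topspace weak_star_topology = UNIV"
proof -
  have "(UNIV :: 'a measure set) = {M. integral\<^sup>L M (\<lambda>x::'a. 0::real) \<in> UNIV}" by simp
  moreover have "continuous_on UNIV (\<lambda>x::'a. 0::real)" by simp
  ultimately have "UNIV \<in> {{M. integral\<^sup>L M f \<in> U} | f U. continuous_on UNIV f \<and> open (U :: real set)}"
    using open_UNIV by blast
  then show ?thesis unfolding weak_star_topology_def by auto
qed

lemma ws_nbhd:
  assumes "openin weak_star_topology U" "M \<in> U"
  shows "\<exists>(F::('a \<Rightarrow> real) set) \<delta>::real. finite F \<and> (\<forall>f\<in>F. continuous_on UNIV f) \<and> \<delta> > 0 \<and>
     {N. \<forall>f\<in>F. \<bar>integral\<^sup>L N f - integral\<^sup>L M f\<bar> < \<delta>} \<subseteq> (U :: 'a::metric_space measure set)"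
proof -
  have "generate_topology_on {{M. integral\<^sup>L M f \<in> U} | f U. continuous_on UNIV (f::'a\<Rightarrow>real) \<and> open (U :: real set)} U"
    using assms(1) unfolding weak_star_topology_def openin_topology_generated_by_iff .
  then show ?thesis using assms(2)
  proof (induction arbitrary: M)
    case Empty then show ?case by simp
  next
    case (Int a b)
    obtain F1 :: "('a \<Rightarrow> real) set" and d1 :: real where 1: "finite F1" "\<forall>f\<in>F1. continuous_on UNIV f" "d1 > 0"
      "{N. \<forall>f\<in>F1. \<bar>integral\<^sup>L N f - integral\<^sup>L M f\<bar> < d1} \<subseteq> a" using Int.IH(1)[of M] Int.prems by blast
    obtain F2 :: "('a \<Rightarrow> real) set" and d2 :: real where 2: "finite F2" "\<forall>f\<in>F2. continuous_on UNIV f" "d2 > 0"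
      "{N. \<forall>f\<in>F2. \<bar>integral\<^sup>L N f - integral\<^sup>L M f\<bar> < d2} \<subseteq> b" using Int.IH(2)[of M] Int.prems by blast
    show ?case
    proof (intro exI conjI)
      show "finite (F1 \<union> F2)" using 1 2 by simp
      show "\<forall>f\<in>F1 \<union> F2. continuous_on UNIV f" using 1 2 by blast
      show "min d1 d2 > 0" using 1 2 by simp
      show "{N. \<forall>f\<in>F1 \<union> F2. \<bar>integral\<^sup>L N f - integral\<^sup>L M f\<bar> < min d1 d2} \<subseteq> a \<inter> b"
      proof
        fix N assume N: "N \<in> {N. \<forall>f\<in>F1 \<union> F2. \<bar>integral\<^sup>L N f - integral\<^sup>L M f\<bar> < min d1 d2}"
        have "N \<in> a" using N 1(4) by (simp add: subset_iff)
        moreover have "N \<in> b" using N 2(4) by (simp add: subset_iff)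
        ultimately show "N \<in> a \<inter> b" by blast
      qed
    qed
  next
    case (UN K)
    then obtain k where k: "k \<in> K" "M \<in> k" by blast
    then obtain F :: "('a \<Rightarrow> real) set" and \<delta> :: real where "finite F" "\<forall>f\<in>F. continuous_on UNIV f" "\<delta> > 0"
      "{N. \<forall>f\<in>F. \<bar>integral\<^sup>L N f - integral\<^sup>L M f\<bar> < \<delta>} \<subseteq> k" using UN.IH[of k M] by blast
    moreover have "k \<subseteq> \<Union>K" using k by blast
    ultimately show ?case by blast
  next
    case (Basis s)
    then obtain f :: "'a \<Rightarrow> real" and V where s: "s = {M. integral\<^sup>L M f \<in> V}" "continuous_on UNIV f" "open V" by blast
    then have "integral\<^sup>L M f \<in> V" using Basis by simp
    then obtain e where e: "e > 0" "ball (integral\<^sup>L M f) e \<subseteq> V" using s(3) open_contains_ball by blast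
    show ?case
    proof (intro exI[of _ "{f}"] exI[of _ e] conjI)
      show "finite {f}" by simp
      show "\<forall>g\<in>{f}. continuous_on UNIV g" using s by simp
      show "e > 0" by fact
      show "{N. \<forall>g\<in>{f}. \<bar>integral\<^sup>L N g - integral\<^sup>L M g\<bar> < e} \<subseteq> s"
      proof
        fix N assume "N \<in> {N. \<forall>g\<in>{f}. \<bar>integral\<^sup>L N g - integral\<^sup>L M g\<bar> < e}"
        then have "integral\<^sup>L N f \<in> ball (integral\<^sup>L M f) e" by (simp add: dist_real_def abs_minus_commute)
        then show "N \<in> s" using e s by auto
      qed
    qed
  qed
qed

lemma ws_open_basic:
  fixes F :: "('a::metric_space \<Rightarrow> real) set" and c :: "('a \<Rightarrow> real) \<Rightarrow> real" and \<delta> :: real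
  assumes "finite F" "\<forall>f\<in>F. continuous_on UNIV f"
  shows "openin weak_star_topology {N :: 'a measure. \<forall>f\<in>F. \<bar>integral\<^sup>L N f - c f\<bar> < \<delta>}"
  using assms
proof (induction F rule: finite_induct)
  case empty
  have "{N :: 'a measure. \<forall>f\<in>{}. \<bar>integral\<^sup>L N f - c f\<bar> < \<delta>} = topspace weak_star_topology"
    by (simp add: ws_topspace)
  then show ?case by (simp only: openin_topspace)
next
  case (insert f F)
  have fc: "continuous_on UNIV f" using insert.prems by simp
  have "{N :: 'a measure. integral\<^sup>L N f \<in> ball (c f) \<delta>} \<in> {{M. integral\<^sup>L M f \<in> U} | f U. continuous_on UNIV f \<and> open (U :: real set)}"
    by (rule CollectI, intro exI[of _ f] exI[of _ "ball (c f) \<delta>"] conjI refl fc open_ball)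
  then have o1: "openin weak_star_topology {N :: 'a measure. integral\<^sup>L N f \<in> ball (c f) \<delta>}"
    unfolding weak_star_topology_def openin_topology_generated_by_iff by (rule generate_topology_on.Basis)
  have e1: "{N :: 'a measure. integral\<^sup>L N f \<in> ball (c f) \<delta>} = {N. \<bar>integral\<^sup>L N f - c f\<bar> < \<delta>}"
    by (simp add: dist_real_def abs_minus_commute)
  have o2: "openin weak_star_topology {N :: 'a measure. \<forall>f\<in>F. \<bar>integral\<^sup>L N f - c f\<bar> < \<delta>}"
    using insert.IH insert.prems by simp
  have e2: "{N :: 'a measure. \<forall>g\<in>insert f F. \<bar>integral\<^sup>L N g - c g\<bar> < \<delta>} =
     {N. \<bar>integral\<^sup>L N f - c f\<bar> < \<delta>} \<inter> {N. \<forall>f\<in>F. \<bar>integral\<^sup>L N f - c f\<bar> < \<delta>}" by auto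
  show ?case unfolding e2 using openin_Int[OF o1 o2] unfolding e1 .
qed

lemma cont_bound:
  assumes "compact (UNIV :: 'a::metric_space set)" "continuous_on UNIV (f :: 'a \<Rightarrow> real)"
  shows "\<exists>B. \<forall>x. \<bar>f x\<bar> \<le> B"
proof -
  have "bounded (f ` UNIV)" using compact_continuous_image[OF assms(2) assms(1)] compact_imp_bounded by blast
  then obtain a where "\<forall>y\<in>f ` UNIV. norm y \<le> a" unfolding bounded_iff by blast
  then show ?thesis by auto
qed

lemma integral_mixm_cont:
  fixes f :: "'a::metric_space \<Rightarrow> real"
  assumes cpt: "compact (UNIV :: 'a set)" and fc: "continuous_on UNIV f"
    and fin: "finite I" and sets: "\<And>i. i \<in> I \<Longrightarrow> sets (\<nu> i) = sets borel"
    and pr: "\<And>i. i \<in> I \<Longrightarrow> prob_space (\<nu> i)"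
    and c: "\<And>i. i \<in> I \<Longrightarrow> c i \<ge> 0" and c1: "(\<Sum>i\<in>I. c i) = 1"
  shows "integral\<^sup>L (mixm I c \<nu>) f = (\<Sum>i\<in>I. c i * integral\<^sup>L (\<nu> i) f)"
proof -
  obtain B where B: "\<And>x. \<bar>f x\<bar> \<le> B" using cont_bound[OF cpt fc] by blast
  show ?thesis by (rule integral_mixm[OF fin sets pr c c1 borel_measurable_continuous_onI[OF fc] B])
qed

lemma aux_div: "(c::real) > 0 \<Longrightarrow> c * (x / (2*(c*c*(c+1)))) = x / (2*(c*(c+1)))"
proof -
  assume c: "c > 0"
  have "2*(c*c*(c+1)) = c*(2*(c*(c+1)))" by (simp add: algebra_simps)
  then have "c * (x / (2*(c*c*(c+1)))) = (c * x) / (c*(2*(c*(c+1))))" by simp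
  also have "\<dots> = x / (2*(c*(c+1)))" using c by (intro nonzero_mult_divide_mult_cancel_left) simp
  finally show ?thesis .
qed

lemma rot_vec_nth: "rot_vec \<phi> M $ j = integral\<^sup>L M (\<lambda>x. \<phi> x $ j)"
  unfolding rot_vec_def by simp


theorem mainTheorem3:
  fixes T :: "'a::metric_space \<Rightarrow> 'a" and \<phi> :: "'a \<Rightarrow> real ^ 'd" and h :: "real ^ 'd"
  assumes "compact (UNIV :: 'a set)"
    and "continuous_on UNIV T"
    and "invariant_measures T \<subseteq> weak_star_topology closure_of periodic_measures T"
    and "continuous_on UNIV \<phi>"
    and "h \<in> interior (Rot T \<phi>)"
  shows "rot_preimage T \<phi> h \<subseteq>
           weak_star_topology closure_of (rot_preimage T \<phi> h \<inter> N_set T \<phi>)"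
proof
  fix \<mu> assume \<mu>: "\<mu> \<in> rot_preimage T \<phi> h"
  have \<mu>inv: "\<mu> \<in> invariant_measures T" and rv\<mu>: "rot_vec \<phi> \<mu> = h"
    using \<mu> unfolding rot_preimage_def by auto
  have invP: "sets P = sets borel" "prob_space P" if "P \<in> invariant_measures T" for P
    using that unfolding invariant_measures_def by auto
  have invE: "emeasure P (T -` A) = emeasure P A" if "P \<in> invariant_measures T" "A \<in> sets borel" for P A
    using that unfolding invariant_measures_def by blast
  have perinv: "P \<in> invariant_measures T" if "P \<in> periodic_measures T" for P
    using that unfolding periodic_measures_def by auto
  have cpt: "compact (UNIV :: 'a set)" by (rule assms(1))
  have phic: "continuous_on UNIV (\<lambda>x. \<phi> x $ j)" for j
    using assms(4) by (rule continuous_on_component)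
  have mixinv: "mixm I c \<nu> \<in> invariant_measures T"
    if fin: "finite I" and nu: "\<And>i. i \<in> I \<Longrightarrow> \<nu> i \<in> invariant_measures T"
       and c: "\<And>i. i \<in> I \<Longrightarrow> c i \<ge> 0" and c1: "(\<Sum>i\<in>I. c i) = 1" for I c \<nu>
  proof -
    have s: "\<And>i. i \<in> I \<Longrightarrow> sets (\<nu> i) = sets borel" using invP(1)[OF nu] .
    have p: "\<And>i. i \<in> I \<Longrightarrow> prob_space (\<nu> i)" using invP(2)[OF nu] .
    have "\<forall>A\<in>sets borel. emeasure (mixm I c \<nu>) (T -` A) = emeasure (mixm I c \<nu>) A"
    proof
      fix A :: "'a set" assume A: "A \<in> sets borel"
      have e: "\<And>i A. i \<in> I \<Longrightarrow> A \<in> sets borel \<Longrightarrow> emeasure (\<nu> i) (T -` A) = emeasure (\<nu> i) A"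
        using invE nu by blast
      show "emeasure (mixm I c \<nu>) (T -` A) = emeasure (mixm I c \<nu>) A"
        by (rule invariant_mixm[OF fin s e assms(2) A])
    qed
    moreover have "prob_space (mixm I c \<nu>)" by (rule prob_space_mixm[OF fin s p c c1])
    moreover have "sets (mixm I c \<nu>) = sets borel" by simp
    ultimately show ?thesis unfolding invariant_measures_def by blast
  qed
  show "\<mu> \<in> weak_star_topology closure_of (rot_preimage T \<phi> h \<inter> N_set T \<phi>)"
    unfolding in_closure_of ws_topspace
  proof (intro conjI allI impI)
    show "\<mu> \<in> UNIV" by simp
    fix U assume U: "\<mu> \<in> U \<and> openin weak_star_topology U"
    obtain F :: "('a \<Rightarrow> real) set" and \<delta> :: real where F: "finite F" "\<forall>f\<in>F. continuous_on UNIV f" "\<delta> > 0"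
      "{N. \<forall>f\<in>F. \<bar>integral\<^sup>L N f - integral\<^sup>L \<mu> f\<bar> < \<delta>} \<subseteq> U"
      using ws_nbhd[of U \<mu>] U by blast
    obtain r where r: "r > 0" "ball h r \<subseteq> Rot T \<phi>" using assms(5) mem_interior by blast
    obtain idx :: "nat \<Rightarrow> 'd" where idx: "bij_betw idx {..<CARD('d)} UNIV"
      using ex_bij_betw_nat_finite[of "UNIV :: 'd set"] by (auto simp: atLeast0LessThan)
    have d0: "CARD('d) > 0" by simp
    define R where "R = r / (2 * CARD('d))"
    have R0: "R > 0" unfolding R_def using r(1) d0 by simp
    have inball: "h + R *\<^sub>R dirv idx i \<in> ball h r" for i
    proof -
      have "norm (R *\<^sub>R dirv idx i) = R * norm (dirv idx i)" using R0 by simp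
      also have "\<dots> \<le> R * CARD('d)" using R0 dirv_norm[of idx i] by (intro mult_left_mono) auto
      also have "\<dots> = r / 2" unfolding R_def using d0 by simp
      finally show ?thesis using r(1) by (simp add: dist_norm)
    qed
    have "\<forall>i\<in>{..CARD('d)}. \<exists>m. m \<in> invariant_measures T \<and> rot_vec \<phi> m = h + R *\<^sub>R dirv idx i"
    proof
      fix i
      have "h + R *\<^sub>R dirv idx i \<in> rot_vec \<phi> ` invariant_measures T"
        using inball[of i] r(2) unfolding Rot_def by blast
      then show "\<exists>m. m \<in> invariant_measures T \<and> rot_vec \<phi> m = h + R *\<^sub>R dirv idx i" by auto
    qed
    then obtain m where m: "\<And>i. i \<le> CARD('d) \<Longrightarrow> m i \<in> invariant_measures T \<and> rot_vec \<phi> (m i) = h + R *\<^sub>R dirv idx i"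
      using bchoice[of "{..CARD('d)}"] by (metis atMost_iff)
    define K where "K = (\<Sum>i\<le>CARD('d). \<Sum>f\<in>F. \<bar>integral\<^sup>L (m i) f - integral\<^sup>L \<mu> f\<bar>)"
    have K0: "K \<ge> 0" unfolding K_def by (intro sum_nonneg) auto
    have Kb: "\<bar>integral\<^sup>L (m i) f - integral\<^sup>L \<mu> f\<bar> \<le> K" if "i \<le> CARD('d)" "f \<in> F" for i f
    proof -
      have "\<bar>integral\<^sup>L (m i) f - integral\<^sup>L \<mu> f\<bar> \<le> (\<Sum>f\<in>F. \<bar>integral\<^sup>L (m i) f - integral\<^sup>L \<mu> f\<bar>)"
        using F(1) that(2) by (intro member_le_sum) auto
      also have "\<dots> \<le> K" unfolding K_def using that(1)
        by (intro member_le_sum[of i "{..CARD('d)}" "\<lambda>i. \<Sum>f\<in>F. \<bar>integral\<^sup>L (m i) f - integral\<^sup>L \<mu> f\<bar>"]) (auto intro: sum_nonneg)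
      finally show ?thesis .
    qed
    define t where "t = min (1/2) (\<delta> / (2*(K+1)))"
    have "0 < \<delta> / (2*(K+1))" using F(3) K0 by (intro divide_pos_pos) auto
    then have t0: "0 < t" "t \<le> 1/2" unfolding t_def by (simp_all only: min_less_iff_conj min.cobounded1) simp
    have tK: "t * K < \<delta>/2"
    proof -
      have "t * K \<le> (\<delta> / (2*(K+1))) * K" unfolding t_def using K0 by (intro mult_right_mono) auto
      also have "\<dots> = (\<delta>/2) * (K/(K+1))" by simp
      also have "\<dots> < (\<delta>/2) * 1" using K0 F(3) by (intro mult_strict_left_mono) auto
      finally show ?thesis by simp
    qed
    define w where "w = (\<lambda>j::nat. if j = 0 then 1 - t else t)"
    define \<rho> where "\<rho> i = mixm {0,1} w (\<lambda>j. if j = 0 then \<mu> else m i)" for i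
    have w0: "\<And>j. j \<in> {0,1} \<Longrightarrow> w j \<ge> 0" unfolding w_def using t0 by auto
    have w1: "(\<Sum>j\<in>{0,1}. w j) = 1" unfolding w_def by simp
    have comp_inv: "(if j = 0 then \<mu> else m i) \<in> invariant_measures T" if "i \<le> CARD('d)" for i j
      using \<mu>inv m[OF that] by auto
    have \<rho>inv: "\<rho> i \<in> invariant_measures T" if "i \<le> CARD('d)" for i
      unfolding \<rho>_def by (rule mixinv) (use comp_inv[OF that] w0 w1 \<mu>inv m[OF that] in auto)
    have \<rho>int: "integral\<^sup>L (\<rho> i) f = (1-t) * integral\<^sup>L \<mu> f + t * integral\<^sup>L (m i) f"
      if "i \<le> CARD('d)" "continuous_on UNIV f" for i f
    proof -
      have "integral\<^sup>L (\<rho> i) f = (\<Sum>j\<in>{0,1}. w j * integral\<^sup>L (if j = 0 then \<mu> else m i) f)"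
        unfolding \<rho>_def
        by (rule integral_mixm_cont[OF cpt that(2)]) (use invP[OF \<mu>inv] invP[OF conjunct1[OF m[OF that(1)]]] w0 w1 in auto)
      then show ?thesis unfolding w_def by simp
    qed
    have \<rho>rv: "rot_vec \<phi> (\<rho> i) = h + (t*R) *\<^sub>R dirv idx i" if "i \<le> CARD('d)" for i
    proof (rule vec_eq_iff[THEN iffD2], rule allI)
      fix j
      have "rot_vec \<phi> (\<rho> i) $ j = (1-t) * (rot_vec \<phi> \<mu> $ j) + t * (rot_vec \<phi> (m i) $ j)"
        unfolding rot_vec_nth using \<rho>int[OF that phic] .
      also have "\<dots> = (h + (t*R) *\<^sub>R dirv idx i) $ j" using m[OF that] rv\<mu> by (simp add: algebra_simps)
      finally show "rot_vec \<phi> (\<rho> i) $ j = (h + (t*R) *\<^sub>R dirv idx i) $ j" .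
    qed
    define G where "G = F \<union> range (\<lambda>j x. \<phi> x $ j)"
    have Gfin: "finite G" unfolding G_def using F(1) by simp
    have Gc: "\<forall>f\<in>G. continuous_on UNIV f" unfolding G_def using F(2) phic by auto
    define \<eta> where "\<eta> = min (\<delta>/2) (t*R/(2*(CARD('d)*CARD('d)*(CARD('d)+1))))"
    have cpos: "(0::real) < real CARD('d)" by simp
    have Dp: "(0::real) < 2*(CARD('d)*CARD('d)*(CARD('d)+1))"
      by (simp only: of_nat_0_less_iff) simp
    have "0 < t*R/(2*(CARD('d)*CARD('d)*(CARD('d)+1)))" using t0 R0 Dp by (intro divide_pos_pos mult_pos_pos) auto
    then have \<eta>0: "\<eta> > 0" unfolding \<eta>_def using F(3) by simp
    have "\<forall>i\<in>{..CARD('d)}. \<exists>\<nu>. \<nu> \<in> periodic_measures T \<and> (\<forall>f\<in>G. \<bar>integral\<^sup>L \<nu> f - integral\<^sup>L (\<rho> i) f\<bar> < \<eta>)"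
    proof
      fix i assume i: "i \<in> {..CARD('d)}"
      have cl: "\<rho> i \<in> weak_star_topology closure_of periodic_measures T"
        using assms(3) \<rho>inv i by auto
      define W where "W = {N. \<forall>f\<in>G. \<bar>integral\<^sup>L N f - integral\<^sup>L (\<rho> i) f\<bar> < \<eta>}"
      have op: "openin weak_star_topology W"
        unfolding W_def by (rule ws_open_basic[OF Gfin Gc])
      have mem: "\<rho> i \<in> W" unfolding W_def using \<eta>0 by simp
      have "\<forall>V. \<rho> i \<in> V \<and> openin weak_star_topology V \<longrightarrow> (\<exists>y. y \<in> periodic_measures T \<and> y \<in> V)"
        using cl unfolding in_closure_of by (elim conjE)
      then obtain y where "y \<in> periodic_measures T" "y \<in> W" using op mem by blast
      then show "\<exists>\<nu>. \<nu> \<in> periodic_measures T \<and> (\<forall>f\<in>G. \<bar>integral\<^sup>L \<nu> f - integral\<^sup>L (\<rho> i) f\<bar> < \<eta>)"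
        unfolding W_def by blast
    qed
    then obtain \<nu> where \<nu>: "\<And>i. i \<le> CARD('d) \<Longrightarrow> \<nu> i \<in> periodic_measures T \<and> (\<forall>f\<in>G. \<bar>integral\<^sup>L (\<nu> i) f - integral\<^sup>L (\<rho> i) f\<bar> < \<eta>)"
      using bchoice[of "{..CARD('d)}"] by (metis atMost_iff)
    define u where "u i = rot_vec \<phi> (\<nu> i)" for i
    have uclose: "norm (u i - (h + (t*R) *\<^sub>R dirv idx i)) \<le> (t*R) / (2 * (CARD('d) * (CARD('d)+1)))"
      if i: "i \<le> CARD('d)" for i
    proof -
      have "norm (u i - (h + (t*R) *\<^sub>R dirv idx i)) \<le> (\<Sum>j\<in>UNIV. \<bar>(u i - (h + (t*R) *\<^sub>R dirv idx i)) $ j\<bar>)"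
        by (rule norm_le_l1_cart)
      also have "\<dots> = (\<Sum>j\<in>UNIV. \<bar>integral\<^sup>L (\<nu> i) (\<lambda>x. \<phi> x $ j) - integral\<^sup>L (\<rho> i) (\<lambda>x. \<phi> x $ j)\<bar>)"
        unfolding \<rho>rv[OF i, symmetric] u_def by (simp add: rot_vec_nth)
      also have "\<dots> \<le> of_nat (card (UNIV :: 'd set)) * \<eta>"
      proof (rule sum_bounded_above)
        fix j :: 'd
        have "(\<lambda>x. \<phi> x $ j) \<in> G" unfolding G_def by auto
        then show "\<bar>integral\<^sup>L (\<nu> i) (\<lambda>x. \<phi> x $ j) - integral\<^sup>L (\<rho> i) (\<lambda>x. \<phi> x $ j)\<bar> \<le> \<eta>"
          using \<nu>[OF i] by (auto intro: less_imp_le)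
      qed
      also have "\<dots> \<le> CARD('d) * (t*R/(2*(CARD('d)*CARD('d)*(CARD('d)+1))))"
        unfolding \<eta>_def by (intro mult_left_mono) auto
      also have "\<dots> = (t*R) / (2 * (CARD('d) * (CARD('d)+1)))"
        unfolding of_nat_mult of_nat_add of_nat_1 of_nat_numeral by (rule aux_div[OF cpos])
      finally show ?thesis .
    qed
    obtain lam where lam: "\<forall>i\<le>CARD('d). 0 < lam i" "(\<Sum>i\<le>CARD('d). lam i) = 1"
      "(\<Sum>i\<le>CARD('d). lam i *\<^sub>R u i) = h" "span {u i - u CARD('d) | i. i < CARD('d)} = UNIV"
      using geom[OF idx mult_pos_pos[OF t0(1) R0] uclose] by blast
    define Mf where "Mf = mixm {..CARD('d)} lam \<nu>"
    have \<nu>inv: "\<And>i. i \<in> {..CARD('d)} \<Longrightarrow> \<nu> i \<in> invariant_measures T" using \<nu> perinv by auto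
    have lam0: "\<And>i. i \<in> {..CARD('d)} \<Longrightarrow> lam i \<ge> 0" using lam(1) by (auto intro: less_imp_le)
    have Mfint: "integral\<^sup>L Mf f = (\<Sum>i\<le>CARD('d). lam i * integral\<^sup>L (\<nu> i) f)" if "continuous_on UNIV f" for f
      unfolding Mf_def
      by (rule integral_mixm_cont[OF cpt that]) (use \<nu>inv invP lam0 lam(2) in auto)
    have Mfinv: "Mf \<in> invariant_measures T" unfolding Mf_def
      by (rule mixinv) (use \<nu>inv lam0 lam(2) in auto)
    have Mfrv: "rot_vec \<phi> Mf = h"
    proof (rule vec_eq_iff[THEN iffD2], rule allI)
      fix j
      have "rot_vec \<phi> Mf $ j = (\<Sum>i\<le>CARD('d). lam i * (u i $ j))"
        unfolding rot_vec_nth Mfint[OF phic] u_def by simp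
      also have "\<dots> = (\<Sum>i\<le>CARD('d). lam i *\<^sub>R u i) $ j" by simp
      finally show "rot_vec \<phi> Mf $ j = h $ j" using lam(3) by simp
    qed
    have MfN: "Mf \<in> N_set T \<phi>"
      unfolding N_set_def
    proof (intro CollectI exI conjI)
      show "\<forall>i\<le>CARD('d). \<nu> i \<in> periodic_measures T \<and> 0 < lam i" using \<nu> lam(1) by auto
      show "(\<Sum>i\<le>CARD('d). lam i) = 1" by (rule lam(2))
      show "span {rot_vec \<phi> (\<nu> i) - rot_vec \<phi> (\<nu> CARD('d)) | i. i < CARD('d)} = UNIV"
        using lam(4) unfolding u_def .
      show "sets Mf = sets borel" unfolding Mf_def by simp
      show "\<forall>A\<in>sets borel. emeasure Mf A = (\<Sum>i\<le>CARD('d). ennreal (lam i) * emeasure (\<nu> i) A)"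
        unfolding Mf_def using emeasure_mixm[of "{..CARD('d)}" \<nu>] \<nu>inv invP by auto
    qed
    have MfU: "Mf \<in> U"
    proof -
      have "\<bar>integral\<^sup>L Mf f - integral\<^sup>L \<mu> f\<bar> < \<delta>" if f: "f \<in> F" for f
      proof -
        have fc: "continuous_on UNIV f" using F(2) f by auto
        have each: "\<bar>integral\<^sup>L (\<nu> i) f - integral\<^sup>L \<mu> f\<bar> < \<delta>" if i: "i \<le> CARD('d)" for i
        proof -
          have a: "\<bar>integral\<^sup>L (\<nu> i) f - integral\<^sup>L (\<rho> i) f\<bar> < \<delta>/2"
            using \<nu>[OF i] f unfolding G_def \<eta>_def by auto
          have "integral\<^sup>L (\<rho> i) f - integral\<^sup>L \<mu> f = t * (integral\<^sup>L (m i) f - integral\<^sup>L \<mu> f)"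
            using \<rho>int[OF i fc] by (simp add: algebra_simps)
          then have "\<bar>integral\<^sup>L (\<rho> i) f - integral\<^sup>L \<mu> f\<bar> = t * \<bar>integral\<^sup>L (m i) f - integral\<^sup>L \<mu> f\<bar>"
            using t0 by (simp add: abs_mult)
          also have "\<dots> \<le> t * K" using Kb[OF i f] t0 by (intro mult_left_mono) auto
          finally have b: "\<bar>integral\<^sup>L (\<rho> i) f - integral\<^sup>L \<mu> f\<bar> < \<delta>/2" using tK by linarith
          show ?thesis using a b by linarith
        qed
        have "integral\<^sup>L Mf f - integral\<^sup>L \<mu> f = (\<Sum>i\<le>CARD('d). lam i * (integral\<^sup>L (\<nu> i) f - integral\<^sup>L \<mu> f))"
          using Mfint[OF fc] lam(2) by (simp add: right_diff_distrib sum_subtractf sum_distrib_right[symmetric])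
        then have "\<bar>integral\<^sup>L Mf f - integral\<^sup>L \<mu> f\<bar> \<le> (\<Sum>i\<le>CARD('d). \<bar>lam i * (integral\<^sup>L (\<nu> i) f - integral\<^sup>L \<mu> f)\<bar>)"
          by (simp add: sum_abs)
        also have "\<dots> = (\<Sum>i\<le>CARD('d). lam i * \<bar>integral\<^sup>L (\<nu> i) f - integral\<^sup>L \<mu> f\<bar>)"
          using lam0 by (intro sum.cong refl) (simp add: abs_mult)
        also have "\<dots> < (\<Sum>i\<le>CARD('d). lam i * \<delta>)"
          using lam(1) each by (intro sum_strict_mono) (auto intro: mult_strict_left_mono)
        also have "\<dots> = \<delta>" using lam(2) by (simp add: sum_distrib_right[symmetric])
        finally show ?thesis .
      qed
      then show ?thesis using F(4) by blast
    qed
    show "\<exists>y. y \<in> rot_preimage T \<phi> h \<inter> N_set T \<phi> \<and> y \<in> U"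
      using Mfinv Mfrv MfN MfU unfolding rot_preimage_def by blast
  qed
qed

end
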